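(* Let $M>0$, $\beta^*>0$, and let $g$ be the log-normal density $g(t)=\frac{1}{t\sigma\sqrt{2\pi}}\exp\!\big(-\frac{(\ln t-\mu)^2}{2\sigma^2}\big)$ for $t>0$, $g(t)=0$ for $t\le0$ ($\mu\in\mathbb{R}$, $\sigma>0$). Let $I$ be the unique $C^1$ solution on $[0,\infty)$ of \[ I'(t)=\beta^*(M-I(t))\Big(I(t)-\int_0^t g(t-s)I(s)\,ds\Big),\qquad I(0)=I_0\in[0,M]. \] If $0<I_0<M$, then $I'(t)>0$ for all $t\ge0$; if $I_0=0$ or $I_0=M$, then $I'\equiv 0$. *)

theory Defs
  imports "HOL-Analysis.Analysis"
begin

definition lognormal_density :: "real \<Rightarrow> real \<Rightarrow> real \<Rightarrow> real" where
  "lognormal_density \<mu> \<sigma> t =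
     (if t > 0 then (1 / (t * \<sigma> * sqrt (2 * pi))) * exp (- ((ln t - \<mu>)^2) / (2 * \<sigma>^2))
      else 0)"

end

theory Submission
imports Defs "HOL-Probability.Distributions" "HOL-Real_Asymp.Real_Asymp" begin

lemma g_nonneg: "\<sigma> > 0 \<Longrightarrow> 0 \<le> lognormal_density \<mu> \<sigma> t"
  by (auto simp: lognormal_density_def)

lemma g_pos: "\<sigma> > 0 \<Longrightarrow> t > 0 \<Longrightarrow> 0 < lognormal_density \<mu> \<sigma> t"
  by (auto simp: lognormal_density_def)

lemma g_bound:
  assumes "\<sigma> > 0"
  shows "lognormal_density \<mu> \<sigma> t \<le> exp (\<sigma>^2/2 - \<mu>) / (\<sigma> * sqrt (2*pi))"
proof (cases "t > 0")
  case True
  define x where "x = ln t"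
  have t: "t = exp x" using True x_def by simp
  have q: "- x - (x - \<mu>)^2 / (2*\<sigma>^2) \<le> \<sigma>^2/2 - \<mu>"
  proof -
    have e: "- x - (x - \<mu>)^2 / (2*\<sigma>^2) = -((x - \<mu> + \<sigma>^2)^2 / (2*\<sigma>^2)) + (\<sigma>^2/2 - \<mu>)"
      using assms by (simp add: field_simps power2_eq_square)
    have "0 \<le> (x - \<mu> + \<sigma>^2)^2 / (2*\<sigma>^2)" by simp
    thus ?thesis unfolding e by linarith
  qed
  define E where "E = exp (- ((x - \<mu>)^2) / (2*\<sigma>^2))"
  have lnx: "ln t = x" by (simp add: x_def)
  have ex: "exp (- x - (x - \<mu>)^2 / (2*\<sigma>^2)) = (1 / t) * E"
  proof -
    have "exp (- x - (x - \<mu>)^2 / (2*\<sigma>^2)) = exp (-x + (- ((x - \<mu>)^2) / (2*\<sigma>^2)))"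
      by (simp only: diff_conv_add_uminus minus_divide_left)
    also have "\<dots> = exp (-x) * E"
      unfolding E_def by (rule exp_add)
    also have "exp (-x) = 1 / t" unfolding t by (simp add: exp_minus inverse_eq_divide)
    finally show ?thesis .
  qed
  have "lognormal_density \<mu> \<sigma> t = exp (- x - (x - \<mu>)^2 / (2*\<sigma>^2)) / (\<sigma> * sqrt (2*pi))"
  proof -
    have "lognormal_density \<mu> \<sigma> t = (1 / (t * \<sigma> * sqrt (2 * pi))) * exp (- ((ln t - \<mu>)^2) / (2 * \<sigma>^2))"
      using True by (simp add: lognormal_density_def)
    also have "\<dots> = (1/t * E) / (\<sigma> * sqrt (2*pi))" unfolding E_def using True lnx by simp
    finally show ?thesis unfolding ex .
  qed
  also have "\<dots> \<le> exp (\<sigma>^2/2 - \<mu>) / (\<sigma> * sqrt (2*pi))"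
    using q assms by (intro divide_right_mono) auto
  finally show ?thesis .
qed (use assms in \<open>auto simp: lognormal_density_def\<close>)

lemma g_cont:
  assumes "\<sigma> > 0"
  shows "isCont (lognormal_density \<mu> \<sigma>) t"
proof -
  let ?f = "\<lambda>t. (1 / (t * \<sigma> * sqrt (2 * pi))) * exp (- ((ln t - \<mu>)^2) / (2 * \<sigma>^2))"
  have c1: "continuous_on {0<..} (lognormal_density \<mu> \<sigma>)"
  proof -
    have "continuous_on {0<..} ?f" using assms by (intro continuous_intros) auto
    thus ?thesis by (rule continuous_on_eq) (auto simp: lognormal_density_def)
  qed
  have c2: "continuous_on {..<0} (lognormal_density \<mu> \<sigma>)"
    by (rule continuous_on_eq[OF continuous_on_const[of _ 0]]) (auto simp: lognormal_density_def)
  consider "t > 0" | "t < 0" | "t = 0" by linarith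
  then show ?thesis
  proof cases
    case 1 then show ?thesis using c1 by (metis continuous_on_eq_continuous_at greaterThan_iff open_greaterThan)
  next
    case 2 then show ?thesis using c2 by (metis continuous_on_eq_continuous_at lessThan_iff open_lessThan)
  next
    case 3
    have r: "(?f \<longlongrightarrow> 0) (at_right 0)" using assms by real_asymp
    have r': "(lognormal_density \<mu> \<sigma> \<longlongrightarrow> 0) (at_right 0)"
      apply (rule Lim_transform_eventually[OF r])
      using eventually_at_right_less[of "0::real"] by eventually_elim (simp add: lognormal_density_def)
    have l: "(lognormal_density \<mu> \<sigma> \<longlongrightarrow> 0) (at_left 0)"
    proof (rule Lim_transform_eventually[OF tendsto_const[of 0]])
      show "\<forall>\<^sub>F x in at_left 0. 0 = lognormal_density \<mu> \<sigma> x"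
        unfolding eventually_at_left_field by (rule exI[of _ "-1"]) (simp add: lognormal_density_def)
    qed
    have g0: "lognormal_density \<mu> \<sigma> 0 = 0" by (simp add: lognormal_density_def)
    show ?thesis unfolding 3 isCont_def g0 by (rule filterlim_split_at[OF l r'])
  qed
qed


lemma g_int_le1:
  assumes s: "\<sigma> > 0" and T: "T \<ge> 0"
  shows "integral {0..T} (lognormal_density \<mu> \<sigma>) \<le> 1"
proof -
  let ?g = "lognormal_density \<mu> \<sigma>"
  define B where "B = exp (\<sigma>^2/2 - \<mu>) / (\<sigma> * sqrt (2*pi))"
  have Bpos: "B > 0" using s by (simp add: B_def)
  have gB: "\<And>t. ?g t \<le> B" using g_bound[OF s] by (simp add: B_def)
  have gc: "continuous_on UNIV ?g" by (intro continuous_at_imp_continuous_on ballI g_cont[OF s])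
  have gi: "\<And>a b. ?g integrable_on {a..b}"
    by (rule integrable_continuous_interval[OF continuous_on_subset[OF gc]]) auto
  have part: "integral {a..T} ?g \<le> 1" if a: "0 < a" "a \<le> T" for a
  proof -
    let ?\<phi> = "normal_density \<mu> \<sigma>"
    have phic: "continuous_on S ?\<phi>" for S unfolding normal_density_def using s by (intro continuous_intros) auto
    have sub: "((\<lambda>x. (1/x) *\<^sub>R ?\<phi> (ln x)) has_integral integral {ln a..ln T} ?\<phi>) {a..T}"
    proof -
      have d: "(ln has_real_derivative 1 / x) (at x within {a..T})" if "x \<in> {a..T}" for x
        using that a by (intro has_field_derivative_at_within[OF DERIV_ln_divide]) auto
      show ?thesis
        apply (rule has_integral_substitution[where g=ln and g'="\<lambda>x. 1/x" and f="normal_density \<mu> \<sigma>" and c="ln a" and d="ln T"])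
        using a d phic by auto
    qed
    have "(?g has_integral integral {ln a..ln T} ?\<phi>) {a..T}"
      by (rule has_integral_eq[OF _ sub]) (use a s in \<open>auto simp: normal_density_def lognormal_density_def real_sqrt_mult\<close>)
    hence eq1: "integral {a..T} ?g = integral {ln a..ln T} ?\<phi>" by (rule integral_unique)
    have U: "(?\<phi> has_integral 1) UNIV"
      using has_integral_integral_lborel[OF integrable_normal_density[OF s, of \<mu>]] s by simp
    have "integral {ln a..ln T} ?\<phi> \<le> integral UNIV ?\<phi>"
      by (rule integral_subset_le) (use U in \<open>auto intro: integrable_continuous_interval phic\<close>)
    also have "\<dots> = 1" using U by (rule integral_unique)
    finally show ?thesis using eq1 by simp
  qed
  show ?thesis
  proof (rule ccontr)
    assume "\<not> ?thesis"
    hence X: "integral {0..T} ?g > 1" by simp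
    define a where "a = min T ((integral {0..T} ?g - 1) / (2*B))"
    have T0: "T > 0" using X T by (cases "T = 0") auto
    have a: "0 < a" "a \<le> T" "a \<le> (integral {0..T} ?g - 1) / (2*B)"
      using X T0 Bpos by (auto simp: a_def)
    have comb: "integral {0..T} ?g = integral {0..a} ?g + integral {a..T} ?g"
      using Henstock_Kurzweil_Integration.integral_combine[where a=0 and c=a and b=T and f="?g"] a gi by simp
    have i1: "integral {0..a} ?g \<le> a * B"
    proof -
      have "integral {0..a} ?g \<le> integral {0..a} (\<lambda>_. B)" by (rule integral_le) (auto simp: gi gB)
      thus ?thesis using a by simp
    qed
    have "a * B \<le> (integral {0..T} ?g - 1) / (2*B) * B" using a Bpos by (intro mult_right_mono) auto
    also have "\<dots> = (integral {0..T} ?g - 1) / 2" using Bpos by (simp add: field_simps)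
    finally show False using comb i1 part[OF a(1,2)] X by argo
  qed
qed

lemma gronwall_zero:
  fixes J J' :: "real \<Rightarrow> real"
  assumes T: "T \<ge> 0" and L: "L \<ge> 0"
    and d: "\<And>t. t \<in> {0..T} \<Longrightarrow> (J has_real_derivative J' t) (at t within {0..T})"
    and b: "\<And>t. t \<in> {0..T} \<Longrightarrow> \<bar>J' t\<bar> \<le> L * \<bar>J t\<bar>"
    and z: "J 0 = 0"
  shows "J T = 0"
proof -
  define \<phi> where "\<phi> t = (J t)^2 * exp (-2*L*t)" for t
  define \<phi>' where "\<phi>' t = 2 * J t * J' t * exp (-2*L*t) + (J t)^2 * (exp (-2*L*t) * (-2*L))" for t
  have d\<phi>: "(\<phi> has_real_derivative \<phi>' t) (at t within {0..T})" if "t \<in> {0..T}" for t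
    unfolding \<phi>_def[abs_def] \<phi>'_def using d[OF that]
    by (auto intro!: derivative_eq_intros simp: power2_eq_square)
  have np: "\<phi>' t \<le> 0" if "t \<in> {0..T}" for t
  proof -
    have "J t * J' t \<le> \<bar>J t\<bar> * \<bar>J' t\<bar>" by (metis abs_ge_self abs_mult)
    also have "\<dots> \<le> \<bar>J t\<bar> * (L * \<bar>J t\<bar>)" by (intro mult_left_mono b that) auto
    also have "\<dots> = L * (J t)^2" by (simp add: power2_eq_square)
    finally have "J t * J' t - L * (J t)^2 \<le> 0" by simp
    moreover have "\<phi>' t = 2 * exp (-2*L*t) * (J t * J' t - L * (J t)^2)"
      by (simp add: \<phi>'_def algebra_simps)
    ultimately show ?thesis by (simp add: mult_nonneg_nonpos)
  qed
  have "\<phi> T \<le> \<phi> 0"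
  proof (rule DERIV_nonpos_imp_decreasing_open[OF T])
    fix x assume x: "0 < x" "x < T"
    have "(\<phi> has_real_derivative \<phi>' x) (at x)"
      using d\<phi>[of x] x by (simp add: at_within_Icc_at)
    thus "\<exists>y. (\<phi> has_real_derivative y) (at x) \<and> y \<le> 0" using np[of x] x by auto
  next
    show "continuous_on {0..T} \<phi>" by (rule DERIV_continuous_on[OF d\<phi>])
  qed
  also have "\<phi> 0 = 0" by (simp add: \<phi>_def z)
  finally have "(J T)^2 * exp (-2*L*T) \<le> 0" by (simp add: \<phi>_def)
  hence "(J T)^2 \<le> 0" by (simp add: mult_le_0_iff)
  thus ?thesis by simp
qed

lemma gronwall_nonzero:
  fixes J J' :: "real \<Rightarrow> real"
  assumes T: "T \<ge> 0" and L: "L \<ge> 0"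
    and d: "\<And>t. t \<in> {0..T} \<Longrightarrow> (J has_real_derivative J' t) (at t within {0..T})"
    and b: "\<And>t. t \<in> {0..T} \<Longrightarrow> \<bar>J' t\<bar> \<le> L * \<bar>J t\<bar>"
    and z: "J 0 \<noteq> 0"
  shows "J T \<noteq> 0"
proof -
  define \<phi> where "\<phi> t = (J t)^2 * exp (2*L*t)" for t
  define \<phi>' where "\<phi>' t = 2 * J t * J' t * exp (2*L*t) + (J t)^2 * (exp (2*L*t) * (2*L))" for t
  have d\<phi>: "(\<phi> has_real_derivative \<phi>' t) (at t within {0..T})" if "t \<in> {0..T}" for t
    unfolding \<phi>_def[abs_def] \<phi>'_def using d[OF that]
    by (auto intro!: derivative_eq_intros simp: power2_eq_square)
  have np: "\<phi>' t \<ge> 0" if "t \<in> {0..T}" for t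
  proof -
    have "- (J t * J' t) \<le> \<bar>J t\<bar> * \<bar>J' t\<bar>" by (metis abs_ge_minus_self abs_mult)
    also have "\<dots> \<le> \<bar>J t\<bar> * (L * \<bar>J t\<bar>)" by (intro mult_left_mono b that) auto
    also have "\<dots> = L * (J t)^2" by (simp add: power2_eq_square)
    finally have "J t * J' t + L * (J t)^2 \<ge> 0" by simp
    moreover have "\<phi>' t = 2 * exp (2*L*t) * (J t * J' t + L * (J t)^2)"
      by (simp add: \<phi>'_def algebra_simps)
    ultimately show ?thesis by simp
  qed
  have "\<phi> 0 \<le> \<phi> T"
  proof (rule DERIV_nonneg_imp_increasing_open[OF T])
    fix x assume x: "0 < x" "x < T"
    have "(\<phi> has_real_derivative \<phi>' x) (at x)"
      using d\<phi>[of x] x by (simp add: at_within_Icc_at)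
    thus "\<exists>y. (\<phi> has_real_derivative y) (at x) \<and> y \<ge> 0" using np[of x] x by auto
  next
    show "continuous_on {0..T} \<phi>" by (rule DERIV_continuous_on[OF d\<phi>])
  qed
  moreover have "\<phi> 0 > 0" using z by (simp add: \<phi>_def)
  ultimately have "\<phi> T > 0" by linarith
  hence "(J T)^2 * exp (2*L*T) > 0" by (simp add: \<phi>_def)
  thus ?thesis by auto
qed



lemma volterra_zero:
  fixes J J' :: "real \<Rightarrow> real"
  assumes T: "T \<ge> 0" and L: "L \<ge> 0"
    and d: "\<And>t. t \<in> {0..T} \<Longrightarrow> (J has_real_derivative J' t) (at t within {0..T})"
    and b: "\<And>t c. t \<in> {0..T} \<Longrightarrow> (\<And>u. u \<in> {0..t} \<Longrightarrow> \<bar>J u\<bar> \<le> c) \<Longrightarrow> \<bar>J' t\<bar> \<le> L * c"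
    and z: "J 0 = 0"
  shows "J T = 0"
proof -
  define \<delta> where "\<delta> = 1 / (2 * (L + 1))"
  have \<delta>: "\<delta> > 0" "L * \<delta> \<le> 1/2" using L by (auto simp: \<delta>_def field_simps)
  have Jc: "continuous_on {0..T} J" by (rule DERIV_continuous_on[OF d])
  have ind: "\<forall>s\<in>{0..T}. s \<le> real n * \<delta> \<longrightarrow> J s = 0" for n
  proof (induction n)
    case 0 then show ?case using z by auto
  next
    case (Suc n)
    define a where "a = real n * \<delta>"
    define b where "b = min (a + \<delta>) T"
    show ?case
    proof (cases "a < T")
      case False
      then show ?thesis using Suc.IH by (auto simp: a_def)
    next
      case True
      have a0: "0 \<le> a" using \<delta> by (simp add: a_def)
      have ab: "a < b" using True \<delta> by (simp add: b_def)
      have bT: "b \<le> T" by (simp add: b_def)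
      have cJ: "continuous_on {0..b} (\<lambda>x. \<bar>J x\<bar>)"
        using continuous_on_subset[OF Jc, of "{0..b}"] bT by (intro continuous_intros) auto
      obtain p where p: "p \<in> {0..b}" "\<forall>y\<in>{0..b}. \<bar>J y\<bar> \<le> \<bar>J p\<bar>"
        using continuous_attains_sup[OF compact_Icc _ cJ] a0 ab by auto
      have c0: "\<bar>J p\<bar> = 0"
      proof (cases "p \<le> a")
        case True then show ?thesis using Suc.IH p bT by (auto simp: a_def)
      next
        case False
        have "norm (J p - J a) \<le> (L * \<bar>J p\<bar>) * norm (p - a)"
        proof (rule field_differentiable_bound[where S="{a..p}"])
          show "convex {a..p}" by (rule convex_real_interval)
          show "(J has_field_derivative J' z) (at z within {a..p})" if "z \<in> {a..p}" for z
            using d[of z] that a0 p bT by (auto intro: DERIV_subset)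
          show "norm (J' z) \<le> L * \<bar>J p\<bar>" if "z \<in> {a..p}" for z
            unfolding real_norm_def
          proof (rule b)
            show "z \<in> {0..T}" using that a0 p bT by auto
            show "\<bar>J u\<bar> \<le> \<bar>J p\<bar>" if "u \<in> {0..z}" for u
              using p(2)[rule_format, of u] that \<open>z \<in> {a..p}\<close> p(1) by auto
          qed
          show "p \<in> {a..p}" "a \<in> {a..p}" using False by auto
        qed
        moreover have "J a = 0" using Suc.IH a0 True by (auto simp: a_def)
        ultimately have "\<bar>J p\<bar> \<le> L * \<bar>J p\<bar> * (p - a)" using False by simp
        also have "\<dots> \<le> L * \<bar>J p\<bar> * \<delta>" using p False L by (intro mult_left_mono) (auto simp: b_def)
        also have "\<dots> = (L * \<delta>) * \<bar>J p\<bar>" by simp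
        also have "\<dots> \<le> (1/2) * \<bar>J p\<bar>" using \<delta> by (intro mult_right_mono) auto
        finally show ?thesis by simp
      qed
      show ?thesis
      proof (intro ballI impI)
        fix s assume s: "s \<in> {0..T}" "s \<le> real (Suc n) * \<delta>"
        hence "s \<in> {0..b}" by (auto simp: b_def a_def algebra_simps)
        thus "J s = 0" using p(2) c0 by force
      qed
    qed
  qed
  obtain n where n: "T / \<delta> \<le> real n" using real_arch_simple by blast
  hence "T \<le> real n * \<delta>" using \<delta> by (simp add: field_simps)
  thus ?thesis using ind[of n] T by auto
qed


theorem proposition3p4:
  fixes M \<beta> \<mu> \<sigma> I0 :: real and I I' :: "real \<Rightarrow> real"
  assumes "M > 0" and "\<beta> > 0" and "\<sigma> > 0"
    and "0 \<le> I0" and "I0 \<le> M"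
    and deriv: "\<And>t. t \<ge> 0 \<Longrightarrow> (I has_real_derivative I' t) (at t within {0..})"
    and cont: "continuous_on {0..} I'"
    and ode: "\<And>t. t \<ge> 0 \<Longrightarrow>
       I' t = \<beta> * (M - I t) *
              (I t - integral {0..t} (\<lambda>s. lognormal_density \<mu> \<sigma> (t - s) * I s))"
    and init: "I 0 = I0"
  shows "(0 < I0 \<and> I0 < M \<longrightarrow> (\<forall>t\<ge>0. I' t > 0))
       \<and> (I0 = 0 \<or> I0 = M \<longrightarrow> (\<forall>t\<ge>0. I' t = 0))"
proof -
  note M = \<open>M > 0\<close> and bp = \<open>\<beta> > 0\<close> and s = \<open>\<sigma> > 0\<close>
  let ?g = "lognormal_density \<mu> \<sigma>"
  define B where "B = exp (\<sigma>^2/2 - \<mu>) / (\<sigma> * sqrt (2*pi))"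
  have Bpos: "B > 0" using s by (simp add: B_def)
  have gB: "\<And>t. ?g t \<le> B" using g_bound[OF s] by (simp add: B_def)
  have g0: "\<And>t. 0 \<le> ?g t" using g_nonneg[OF s] by simp
  have gc: "continuous_on UNIV ?g" by (intro continuous_at_imp_continuous_on ballI g_cont[OF s])
  define F where "F t = integral {0..t} (\<lambda>s. ?g (t - s) * I s)" for t
  define h where "h t = I t - F t" for t
  have odeh: "\<And>t. t \<ge> 0 \<Longrightarrow> I' t = \<beta> * (M - I t) * h t" using ode by (simp add: h_def F_def)
  have Icont: "continuous_on {0..} I" by (rule DERIV_continuous_on[where D=I']) (simp add: deriv)
  have derivT: "(I has_real_derivative I' t) (at t within {0..T})" if "t \<in> {0..T}" for t T
    using deriv[of t] that by (auto intro: DERIV_subset)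
  have Fgen: "\<bar>F t\<bar> \<le> B * c * t" if t: "t \<ge> 0" and c: "\<And>u. u \<in> {0..t} \<Longrightarrow> \<bar>I u\<bar> \<le> c" for t c
  proof -
    have c0: "c \<ge> 0" using c[of 0] t by auto
    show ?thesis
    proof (cases "(\<lambda>s. ?g (t - s) * I s) integrable_on {0..t}")
      case True
      have "norm (F t) \<le> (B * c) * measure lborel (cbox 0 t)"
      proof (rule has_integral_bound)
        show "0 \<le> B * c" using Bpos c0 by simp
        show "((\<lambda>s. ?g (t - s) * I s) has_integral F t) (cbox 0 t)"
          using True by (simp add: F_def integrable_integral)
        fix x assume x: "x \<in> cbox 0 t"
        have "\<bar>?g (t - x)\<bar> \<le> B" using gB g0 by (simp add: abs_of_nonneg)
        moreover have "\<bar>I x\<bar> \<le> c" using x t by (intro c) auto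
        ultimately show "norm (?g (t - x) * I x) \<le> B * c"
          by (simp add: abs_mult mult_mono')
      qed
      then show ?thesis using t by (simp add: mult_ac)
    next
      case False
      then show ?thesis using Bpos c0 t by (simp add: F_def not_integrable_integral)
    qed
  qed
  have bnd: "\<exists>H\<ge>0. \<exists>K\<ge>0. (\<forall>t\<in>{0..T}. \<bar>h t\<bar> \<le> H) \<and> (\<forall>t\<in>{0..T}. \<bar>I t\<bar> \<le> K)" if T: "T \<ge> 0" for T
  proof -
    have "compact (I ` {0..T})" by (rule compact_continuous_image[OF continuous_on_subset[OF Icont]]) auto
    then obtain K where K: "K > 0" "\<forall>x\<in>I ` {0..T}. norm x \<le> K"
      using compact_imp_bounded bounded_pos by metis
    have IK: "\<bar>I t\<bar> \<le> K" if "t \<in> {0..T}" for t using K(2) that by auto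
    have Fb: "\<bar>F t\<bar> \<le> B * K * T" if t: "t \<in> {0..T}" for t
    proof -
      have "\<bar>F t\<bar> \<le> B * K * t" using t by (intro Fgen IK) auto
      also have "\<dots> \<le> B * K * T" using t Bpos K by (intro mult_left_mono) auto
      finally show ?thesis .
    qed
    have "\<bar>h t\<bar> \<le> K + B * K * T" if "t \<in> {0..T}" for t
      using IK[OF that] Fb[OF that] unfolding h_def by linarith
    moreover have "0 \<le> K + B * K * T" using Bpos K T by simp
    ultimately show ?thesis using K IK by (meson less_imp_le)
  qed
  show ?thesis
  proof (intro conjI impI allI)
    fix t :: real
    assume I0: "I0 = 0 \<or> I0 = M" and t: "t \<ge> 0"
    obtain H K where HK: "H \<ge> 0" "K \<ge> 0" "\<forall>s\<in>{0..t}. \<bar>h s\<bar> \<le> H" "\<forall>s\<in>{0..t}. \<bar>I s\<bar> \<le> K"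
      using bnd[OF t] by blast
    from I0 show "I' t = 0"
    proof
      assume z: "I0 = 0"
      have Iz: "I r = 0" if r: "r \<in> {0..t}" for r
      proof (rule volterra_zero[where J=I and J'=I' and L="\<beta> * (M + K) * (1 + B * t)"])
        show "0 \<le> r" using r by simp
        show "0 \<le> \<beta> * (M + K) * (1 + B * t)" using bp M HK Bpos t by simp
        show "(I has_real_derivative I' s) (at s within {0..r})" if "s \<in> {0..r}" for s
          using derivT that by blast
        show "\<bar>I' s\<bar> \<le> \<beta> * (M + K) * (1 + B * t) * c"
          if ss0: "s \<in> {0..r}" and c: "\<And>u. u \<in> {0..s} \<Longrightarrow> \<bar>I u\<bar> \<le> c" for s c
        proof -
          have ss: "s \<in> {0..t}" using ss0 r by auto
          have c0: "c \<ge> 0" using c[of 0] ss by auto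
          have Is: "\<bar>I s\<bar> \<le> K" using HK ss by auto
          have Ic: "\<bar>I s\<bar> \<le> c" using c ss by auto
          have Fs: "\<bar>F s\<bar> \<le> B * c * s" using ss by (intro Fgen c) auto
          have "B * c * s \<le> B * c * t" using ss Bpos c0 by (intro mult_left_mono) auto
          hence hs: "\<bar>h s\<bar> \<le> c * (1 + B * t)" using Ic Fs unfolding h_def by (simp add: algebra_simps)
          have Ms: "\<bar>M - I s\<bar> \<le> M + K" using Is M by linarith
          have "\<bar>I' s\<bar> = \<beta> * (\<bar>M - I s\<bar> * \<bar>h s\<bar>)" using odeh[of s] ss bp by (simp add: abs_mult)
          also have "\<dots> \<le> \<beta> * ((M + K) * (c * (1 + B * t)))"
            using Ms hs bp by (intro mult_left_mono mult_mono) auto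
          finally show ?thesis by (simp add: mult_ac)
        qed
        show "I 0 = 0" using z init by simp
      qed
      have "F t = integral {0..t} (\<lambda>u. 0)"
        unfolding F_def by (rule integral_cong) (simp add: Iz)
      hence "h t = 0" using Iz[of t] t by (simp add: h_def)
      thus ?thesis using odeh[OF t] by simp
    next
      assume z: "I0 = M"
      have "M - I t = 0"
      proof (rule volterra_zero[where J="\<lambda>s. M - I s" and J'="\<lambda>s. - I' s" and L="\<beta> * H"])
        show "0 \<le> t" by fact
        show "0 \<le> \<beta> * H" using bp HK by simp
        show "((\<lambda>s. M - I s) has_real_derivative - I' s) (at s within {0..t})" if "s \<in> {0..t}" for s
          using derivT[OF that] by (auto intro!: derivative_eq_intros)
        show "\<bar>- I' s\<bar> \<le> \<beta> * H * c"
          if ss: "s \<in> {0..t}" and c: "\<And>u. u \<in> {0..s} \<Longrightarrow> \<bar>M - I u\<bar> \<le> c" for s c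
        proof -
          have "\<bar>- I' s\<bar> = \<beta> * \<bar>M - I s\<bar> * \<bar>h s\<bar>" using odeh[of s] ss bp by (simp add: abs_mult)
          also have "\<dots> \<le> \<beta> * c * H" using HK ss bp c[of s] by (intro mult_mono) auto
          finally show ?thesis by (simp add: mult_ac)
        qed
        show "M - I 0 = 0" using z init by simp
      qed
      thus ?thesis using odeh[OF t] by simp
    qed
  next
    fix t :: real
    assume I0: "0 < I0 \<and> I0 < M" and t: "t \<ge> 0"
    have nzM: "M - I s \<noteq> 0" if s0: "s \<ge> 0" for s
    proof -
      obtain H K where HK: "H \<ge> 0" "K \<ge> 0" "\<forall>u\<in>{0..s}. \<bar>h u\<bar> \<le> H" "\<forall>u\<in>{0..s}. \<bar>I u\<bar> \<le> K"
        using bnd[OF s0] by blast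
      show "M - I s \<noteq> 0"
      proof (rule gronwall_nonzero[where J="\<lambda>u. M - I u" and J'="\<lambda>s. - I' s" and L="\<beta> * H"])
        show "0 \<le> s" by fact
        show "0 \<le> \<beta> * H" using bp HK by simp
        show "((\<lambda>s. M - I s) has_real_derivative - I' u) (at u within {0..s})" if "u \<in> {0..s}" for u
          using derivT[OF that] by (auto intro!: derivative_eq_intros)
        show "\<bar>- I' u\<bar> \<le> \<beta> * H * \<bar>M - I u\<bar>" if ss: "u \<in> {0..s}" for u
        proof -
          have "\<bar>- I' u\<bar> = \<beta> * \<bar>M - I u\<bar> * \<bar>h u\<bar>" using odeh[of u] ss bp by (simp add: abs_mult)
          also have "\<dots> \<le> \<beta> * \<bar>M - I u\<bar> * H" using HK ss bp by (intro mult_left_mono) auto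
          finally show ?thesis by (simp add: mult_ac)
        qed
        show "M - I 0 \<noteq> 0" using I0 init by simp
      qed
    qed
    have ltM: "I s < M" if s0: "s \<ge> 0" for s
    proof (rule ccontr)
      assume "\<not> I s < M"
      then obtain x where "0 \<le> x" "x \<le> s" "I x = M"
        using IVT'[of I 0 M s] init I0 continuous_on_subset[OF Icont, of "{0..s}"] s0 by auto
      thus False using nzM by auto
    qed
    have hc: "continuous_on {0..} h"
    proof -
      have "continuous_on {0..} (\<lambda>s. I' s / (\<beta> * (M - I s)))"
        using cont Icont ltM bp by (intro continuous_intros) (auto simp: less_le)
      then show ?thesis
      proof (rule continuous_on_eq)
        fix x :: real assume "x \<in> {0..}"
        hence "x \<ge> 0" by simp
        thus "I' x / (\<beta> * (M - I x)) = h x" using odeh[of x] ltM[of x] bp by (simp add: field_simps)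
      qed
    qed
    have h0: "h 0 > 0" using I0 init by (simp add: h_def F_def)
    have hpos: "\<forall>s\<ge>0. h s > 0"
    proof (rule ccontr)
      assume "\<not> ?thesis"
      then obtain t1 where t1: "t1 \<ge> 0" "h t1 \<le> 0" by auto
      define Z where "Z = {0..t1} \<inter> h -` {..0}"
      have Zc: "closed Z" unfolding Z_def
        by (rule continuous_closed_preimage[OF continuous_on_subset[OF hc]]) auto
      have Zne: "Z \<noteq> {}" using t1 by (auto simp: Z_def)
      have Zb: "bdd_below Z" unfolding Z_def by (rule bdd_belowI[of _ 0]) auto
      define T where "T = Inf Z"
      have TZ: "T \<in> Z" using closed_contains_Inf[OF Zne Zb Zc] by (simp add: T_def)
      hence T: "0 \<le> T" "T \<le> t1" "h T \<le> 0" by (auto simp: Z_def)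
      have below: "h s > 0" if "0 \<le> s" "s < T" for s
      proof (rule ccontr)
        assume "\<not> h s > 0"
        hence "s \<in> Z" using that T by (auto simp: Z_def)
        hence "T \<le> s" unfolding T_def by (rule cInf_lower[OF _ Zb])
        thus False using that by simp
      qed
      have Tpos: "T > 0" using T h0 by (cases "T = 0") auto
      have I'pos: "I' s > 0" if "0 \<le> s" "s < T" for s
        using odeh[of s] below[OF that] ltM[of s] bp that by simp
      have incr: "I s < I T" if st: "0 \<le> s" "s < T" for s
      proof (rule DERIV_pos_imp_increasing_open[OF st(2)])
        fix x assume x: "s < x" "x < T"
        have "(I has_real_derivative I' x) (at x within {0..x+1})" using derivT[of x "x+1"] x st by auto
        hence "(I has_real_derivative I' x) (at x)" using x st by (simp add: at_within_Icc_at)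
        thus "\<exists>y. (I has_real_derivative y) (at x) \<and> y > 0" using I'pos[of x] x st by auto
      next
        show "continuous_on {s..T} I" by (rule continuous_on_subset[OF Icont]) (use st in auto)
      qed
      have ITpos: "I T > 0" using incr[of 0] Tpos init I0 by simp
      have IcT: "continuous_on {0..T} I" by (rule continuous_on_subset[OF Icont]) auto
      have gTc: "continuous_on {0..T} (\<lambda>u. ?g (T - u))"
        by (rule continuous_on_compose2[OF gc]) (auto intro: continuous_intros)
      define q where "q u = ?g (T - u) * (I T - I u)" for u
      have qc: "continuous_on {0..T} q" unfolding q_def using gTc IcT by (intro continuous_intros) auto
      have q0: "q u \<ge> 0" if "u \<in> {0..T}" for u
      proof (cases "u = T")
        case True then show ?thesis by (simp add: q_def)
      next
        case False
        then have "I u < I T" using that by (intro incr) auto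
        then show ?thesis using g0 by (simp add: q_def)
      qed
      have gint: "integral {0..T} (\<lambda>u. ?g (T - u)) \<le> 1"
      proof -
        have "integral {0..T} (\<lambda>u. ?g (T - u)) = integral {-T..0} (\<lambda>x. ?g (T + x))"
          using Henstock_Kurzweil_Integration.integral_reflect_real[of 0 "-T" "\<lambda>x. ?g (T + x)"] by simp
        also have "\<dots> = integral {0..T} ?g"
          using integral_shift_Icc_real[of "-T" 0 ?g T] by (simp add: o_def add.commute)
        finally show ?thesis using g_int_le1[OF s T(1)] by simp
      qed
      have qi: "(q has_integral integral {0..T} q) {0..T}"
        using integrable_continuous_interval[OF qc] by (simp add: integrable_integral)
      have P: "integral {0..T} q > 0"
      proof -
        have ge: "integral {0..T} q \<ge> 0" by (rule has_integral_nonneg[OF qi q0])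
        have "integral {0..T} q \<noteq> 0"
        proof
          assume "integral {0..T} q = 0"
          hence qi0: "(q has_integral 0) (cbox 0 T)" using qi by simp
          have "q 0 = 0"
          proof (rule has_integral_0_cbox_imp_0[where a=0 and b=T and f=q and x=0])
            show "continuous_on (cbox 0 T) q" using qc by simp
            show "0 \<le> q x" if "x \<in> box 0 T" for x using q0 that by (auto simp: box_real)
            show "(q has_integral 0) (cbox 0 T)" by (rule qi0)
            show "box 0 T \<noteq> {}" using Tpos by simp
            show "0 \<in> cbox 0 T" using Tpos by simp
          qed
          moreover have "q 0 > 0" using g_pos[OF s Tpos, of \<mu>] incr[of 0] Tpos by (simp add: q_def)
          ultimately show False by simp
        qed
        with ge show ?thesis by simp
      qed
      have FT: "F T = I T * integral {0..T} (\<lambda>u. ?g (T - u)) - integral {0..T} q"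
      proof -
        have i1: "(\<lambda>u. I T * ?g (T - u)) integrable_on {0..T}"
          by (rule integrable_continuous_interval) (use gTc in \<open>intro continuous_intros\<close>)
        have i2: "q integrable_on {0..T}" by (rule integrable_continuous_interval[OF qc])
        have "F T = integral {0..T} (\<lambda>u. I T * ?g (T - u) - q u)"
          unfolding F_def by (rule integral_cong) (simp add: q_def algebra_simps)
        also have "\<dots> = integral {0..T} (\<lambda>u. I T * ?g (T - u)) - integral {0..T} q"
          by (rule Henstock_Kurzweil_Integration.integral_diff[OF i1 i2])
        also have "integral {0..T} (\<lambda>u. I T * ?g (T - u)) = I T * integral {0..T} (\<lambda>u. ?g (T - u))"
          by simp
        finally show ?thesis .
      qed
      have "I T * integral {0..T} (\<lambda>u. ?g (T - u)) \<le> I T"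
        using ITpos gint by (simp add: mult_left_le)
      hence "h T > 0" using P FT by (simp add: h_def)
      thus False using T by simp
    qed
    show "I' t > 0" using odeh[OF t] hpos t ltM[OF t] bp by simp
  qed
qed

end
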